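(* Couple the original redundancy system and the UB system described in the context so that they have the same arrival instants, types and job sizes, and assume $N_c(0)=N_c^{UB}(0)$ and $a_{cjs}(0)=a^{UB}_{cjs}(0)$ for all $c,j,s$. Then $N_c(t)\le N_c^{UB}(t)$ and $a_{cjs}(t)\ge a^{UB}_{cjs}(t)$ for all $c,j,s$ and all $t\ge0$.
   Context: Model: $K$ parallel servers $S=\{1,\ldots,K\}$ with capacities $\mu_k>0$, each serving its own queue by Processor Sharing (with $M_k$ copies present, each copy at server $k$ receives rate $\mu_k/M_k$). Jobs arrive by a Poisson process; each job independently is of type $c\subseteq S$ with probability $p_c$; $\mathcal C=\{c:p_c>0\}$, $\mathcal C(s)=\{c\in\mathcal C:s\in c\}$. Original (redundancy) system: a type-$c$ job sends identical copies (same size $b_{cj}$ for the $j$th type-$c$ job) to all servers of $c$ and departs as soon as one copy completes, the others being removed. Subsystems: $S_1=S$, $\mathcal C_1=\mathcal C$, $\mathcal C_i(s)=\mathcal C_i\cap\mathcal C(s)$, $\mathcal L_i=\arg\max_{s\in S_i}\frac{\mu_s}{\sum_{c\in\mathcal C_i(s)}p_c}$, $S_{i+1}=S\setminus\bigcup_{l\le i}\mathcal L_l$, $\mathcal C_{i+1}=\{c\in\mathcal C:c\subseteq S_{i+1}\}$; $\mathcal R(c)=\{s:\exists i,\ c\in\mathcal C_i(s),\ s\in\mathcal L_i\}$. UB system: same, except a type-$c$ job departs only when all its copies at servers in $\mathcal R(c)$ are fully served, upon which its remaining copies are removed. $N_c(t)$ ($N_c^{UB}(t)$) is the number of type-$c$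 jobs present at time $t$ in the original (UB) system, and $a_{cjs}(t)$ ($a^{UB}_{cjs}(t)$) the service attained at server $s$ by the copy of the $j$th type-$c$ job. Convention: if a job has already departed in the original system but not in the UB system, its attained service at all its servers in the original system is set equal to its size $b_{cj}$. *)

theory Defs
  imports "HOL-Analysis.Analysis"
begin

definition types :: "('s set \<Rightarrow> real) \<Rightarrow> 's set set" where
  "types p = {c. p c > 0}"

definition sub_types :: "('s set \<Rightarrow> real) \<Rightarrow> 's set \<Rightarrow> 's set set" where
  "sub_types p Si = {c \<in> types p. c \<subseteq> Si}"

definition load :: "('s set \<Rightarrow> real) \<Rightarrow> 's set set \<Rightarrow> 's \<Rightarrow> real" where
  "load p Ci s = (\<Sum>c\<in>{c \<in> Ci. s \<in> c}. p c)"

definition ratio :: "('s \<Rightarrow> real) \<Rightarrow> ('s set \<Rightarrow> real) \<Rightarrow> 's set set \<Rightarrow> 's \<Rightarrow> ereal" where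
  "ratio mu p Ci s = (if load p Ci s = 0 then \<infinity> else ereal (mu s / load p Ci s))"

definition Lset :: "('s \<Rightarrow> real) \<Rightarrow> ('s set \<Rightarrow> real) \<Rightarrow> 's set \<Rightarrow> 's set" where
  "Lset mu p Si = {s \<in> Si. \<forall>s'\<in>Si. ratio mu p (sub_types p Si) s' \<le> ratio mu p (sub_types p Si) s}"

text \<open>Sstage mu p S i is S_{i+1} (index shifted by one): S_1 = S,
  S_{i+1} = S_i - L_i = S - (L_1 \<union> ... \<union> L_i).\<close>
primrec Sstage :: "('s \<Rightarrow> real) \<Rightarrow> ('s set \<Rightarrow> real) \<Rightarrow> 's set \<Rightarrow> nat \<Rightarrow> 's set" where
  "Sstage mu p S 0 = S"
| "Sstage mu p S (Suc i) = Sstage mu p S i - Lset mu p (Sstage mu p S i)"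

definition Rset :: "('s \<Rightarrow> real) \<Rightarrow> ('s set \<Rightarrow> real) \<Rightarrow> 's set \<Rightarrow> 's set \<Rightarrow> 's set" where
  "Rset mu p S c = {s. \<exists>i. c \<in> sub_types p (Sstage mu p S i) \<and> s \<in> c
                          \<and> s \<in> Lset mu p (Sstage mu p S i)}"

text \<open>Jobs are indexed globally by nat: arrival time arr i, type ctyp i, size sz i.
  a i s t is the service attained by the copy of job i at server s by time t.
  pres i t says whether job i is present in the system at time t.\<close>
definition copy_active ::
  "(nat \<Rightarrow> real \<Rightarrow> bool) \<Rightarrow> (nat \<Rightarrow> 's set) \<Rightarrow> (nat \<Rightarrow> real) \<Rightarrow> (nat \<Rightarrow> 's \<Rightarrow> real \<Rightarrow> real)
    \<Rightarrow> nat \<Rightarrow> 's \<Rightarrow> real \<Rightarrow> bool" where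
  "copy_active pres ctyp sz a i s t \<longleftrightarrow> pres i t \<and> s \<in> ctyp i \<and> a i s t < sz i"

definition ncopies ::
  "(nat \<Rightarrow> real \<Rightarrow> bool) \<Rightarrow> (nat \<Rightarrow> 's set) \<Rightarrow> (nat \<Rightarrow> real) \<Rightarrow> (nat \<Rightarrow> 's \<Rightarrow> real \<Rightarrow> real)
    \<Rightarrow> 's \<Rightarrow> real \<Rightarrow> nat" where
  "ncopies pres ctyp sz a s t = card {k. copy_active pres ctyp sz a k s t}"

definition srate ::
  "('s \<Rightarrow> real) \<Rightarrow> (nat \<Rightarrow> real \<Rightarrow> bool) \<Rightarrow> (nat \<Rightarrow> 's set) \<Rightarrow> (nat \<Rightarrow> real)
    \<Rightarrow> (nat \<Rightarrow> 's \<Rightarrow> real \<Rightarrow> real) \<Rightarrow> nat \<Rightarrow> 's \<Rightarrow> real \<Rightarrow> real" where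
  "srate mu pres ctyp sz a i s t =
     (if copy_active pres ctyp sz a i s t then mu s / real (ncopies pres ctyp sz a s t) else 0)"

definition ps_trajectory ::
  "('s \<Rightarrow> real) \<Rightarrow> (nat \<Rightarrow> real) \<Rightarrow> (nat \<Rightarrow> 's set) \<Rightarrow> (nat \<Rightarrow> real) \<Rightarrow> (nat \<Rightarrow> 's \<Rightarrow> real)
    \<Rightarrow> (nat \<Rightarrow> real \<Rightarrow> bool) \<Rightarrow> (nat \<Rightarrow> 's \<Rightarrow> real \<Rightarrow> real) \<Rightarrow> bool" where
  "ps_trajectory mu arr ctyp sz a0 pres a \<longleftrightarrow>
     (\<forall>i s t. s \<in> ctyp i \<longrightarrow> t \<le> arr i \<longrightarrow> a i s t = a0 i s) \<and>
     (\<forall>i s t. s \<in> ctyp i \<longrightarrow> arr i \<le> t \<longrightarrow>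
        (srate mu pres ctyp sz a i s has_integral (a i s t - a0 i s)) {arr i..t})"

definition pres_orig ::
  "(nat \<Rightarrow> real) \<Rightarrow> (nat \<Rightarrow> 's set) \<Rightarrow> (nat \<Rightarrow> real) \<Rightarrow> (nat \<Rightarrow> 's \<Rightarrow> real \<Rightarrow> real)
    \<Rightarrow> nat \<Rightarrow> real \<Rightarrow> bool" where
  "pres_orig arr ctyp sz a i t \<longleftrightarrow> arr i \<le> t \<and> (\<forall>s\<in>ctyp i. a i s t < sz i)"

definition pres_ub ::
  "('s set \<Rightarrow> 's set) \<Rightarrow> (nat \<Rightarrow> real) \<Rightarrow> (nat \<Rightarrow> 's set) \<Rightarrow> (nat \<Rightarrow> real)
    \<Rightarrow> (nat \<Rightarrow> 's \<Rightarrow> real \<Rightarrow> real) \<Rightarrow> nat \<Rightarrow> real \<Rightarrow> bool" where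
  "pres_ub R arr ctyp sz a i t \<longleftrightarrow> arr i \<le> t \<and> (\<exists>s\<in>R (ctyp i). a i s t < sz i)"

definition Ncount :: "(nat \<Rightarrow> real \<Rightarrow> bool) \<Rightarrow> (nat \<Rightarrow> 's set) \<Rightarrow> 's set \<Rightarrow> real \<Rightarrow> nat" where
  "Ncount pres ctyp c t = card {i. pres i t \<and> ctyp i = c}"

definition a_orig_conv ::
  "(nat \<Rightarrow> real) \<Rightarrow> (nat \<Rightarrow> 's set) \<Rightarrow> (nat \<Rightarrow> real) \<Rightarrow> (nat \<Rightarrow> 's \<Rightarrow> real \<Rightarrow> real)
    \<Rightarrow> nat \<Rightarrow> 's \<Rightarrow> real \<Rightarrow> real" where
  "a_orig_conv arr ctyp sz a i s t =
     (if arr i \<le> t \<and> \<not> pres_orig arr ctyp sz a i t then sz i else a i s t)"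

end

theory Submission
  imports Defs
begin


lemma srate_bounds:
  assumes "mu s \<ge> 0"
  shows "0 \<le> srate mu pres ctyp sz a i s t" "srate mu pres ctyp sz a i s t \<le> mu s"
proof -
  let ?n = "real (ncopies pres ctyp sz a s t)"
  show "0 \<le> srate mu pres ctyp sz a i s t" using assms by (simp add: srate_def)
  have "mu s / ?n \<le> mu s"
  proof (cases "?n = 0")
    case True then show ?thesis using assms by simp
  next
    case False then have "?n \<ge> 1" by simp
    then show ?thesis using assms by (simp add: divide_le_eq mult_le_cancel_left1)
  qed
  then show "srate mu pres ctyp sz a i s t \<le> mu s" using assms by (simp add: srate_def)
qed

lemma traj_diff:
  assumes T: "ps_trajectory mu arr ctyp sz a0 pres a" and s: "s \<in> ctyp i"
    and h: "arr i \<le> t1" "t1 \<le> t2"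
  shows "(srate mu pres ctyp sz a i s has_integral (a i s t2 - a i s t1)) {t1..t2}"
proof -
  let ?f = "srate mu pres ctyp sz a i s"
  have I2: "(?f has_integral (a i s t2 - a0 i s)) {arr i..t2}"
    and I1: "(?f has_integral (a i s t1 - a0 i s)) {arr i..t1}"
    using T s h unfolding ps_trajectory_def by auto
  have "?f integrable_on {t1..t2}"
    using integrable_subinterval_real[of ?f "arr i" t2 t1 t2] I2 h by auto
  then obtain j where J: "(?f has_integral j) {t1..t2}" by auto
  have "(?f has_integral (a i s t1 - a0 i s + j)) {arr i..t2}"
    by (rule has_integral_combine[OF _ _ I1 J]) (use h in auto)
  then have "a i s t2 - a0 i s = a i s t1 - a0 i s + j" using I2 has_integral_unique by blast
  then have "j = a i s t2 - a i s t1" by simp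
  then show ?thesis using J by simp
qed

lemma traj_lip:
  assumes T: "ps_trajectory mu arr ctyp sz a0 pres a" and s: "s \<in> ctyp i"
    and mu: "mu s \<ge> 0" and h: "t1 \<le> t2"
  shows "0 \<le> a i s t2 - a i s t1 \<and> a i s t2 - a i s t1 \<le> mu s * (t2 - t1)"
proof -
  have pre: "\<And>t. t \<le> arr i \<Longrightarrow> a i s t = a0 i s" using T s unfolding ps_trajectory_def by auto
  have main: "0 \<le> a i s y - a i s x \<and> a i s y - a i s x \<le> mu s * (y - x)"
    if "arr i \<le> x" "x \<le> y" for x y
  proof -
    have J: "(srate mu pres ctyp sz a i s has_integral (a i s y - a i s x)) {x..y}"
      by (rule traj_diff[OF T s that])
    have "0 \<le> a i s y - a i s x"
      by (rule has_integral_nonneg[OF J]) (use srate_bounds mu in auto)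
    moreover have C: "((\<lambda>_. mu s) has_integral (y - x) * mu s) {x..y}"
      using has_integral_const_real[of "mu s" x y] that by simp
    have "a i s y - a i s x \<le> (y - x) * mu s"
      by (rule has_integral_le[OF J C]) (use srate_bounds mu in auto)
    ultimately show ?thesis by (simp add: mult.commute)
  qed
  show ?thesis
  proof (cases "t2 \<le> arr i")
    case True then show ?thesis using pre h mu by simp
  next
    case False
    show ?thesis
    proof (cases "t1 \<le> arr i")
      case True
      have "a i s t1 = a i s (arr i)" using pre True by simp
      moreover have "mu s * (t2 - arr i) \<le> mu s * (t2 - t1)"
        using True mu by (intro mult_left_mono) auto
      ultimately show ?thesis using main[of "arr i" t2] False by auto
    next
      case False then show ?thesis using main h by simp
    qed
  qed
qed

lemma traj_cont:
  assumes T: "ps_trajectory mu arr ctyp sz a0 pres a" and s: "s \<in> ctyp i"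
    and mu: "mu s \<ge> 0"
  shows "continuous_on X (a i s)"
proof -
  have "(mu s)-lipschitz_on X (a i s)"
  proof (rule lipschitz_onI)
    fix x y
    show "dist (a i s x) (a i s y) \<le> mu s * dist x y"
    proof (cases "x \<le> y")
      case True then show ?thesis using traj_lip[OF T s mu True] by (simp add: dist_real_def)
    next
      case False then have "y \<le> x" by simp
      then show ?thesis using traj_lip[OF T s mu \<open>y \<le> x\<close>] by (simp add: dist_real_def)
    qed
  qed (rule mu)
  then show ?thesis by (rule lipschitz_on_continuous_on)
qed

lemma traj_le_sz:
  assumes T: "ps_trajectory mu arr ctyp sz a0 pres a" and s: "s \<in> ctyp i"
    and mu: "mu s \<ge> 0" and a0: "a0 i s < sz i"
  shows "a i s t \<le> sz i"
proof (rule ccontr)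
  assume "\<not> a i s t \<le> sz i"
  then have gt: "a i s t > sz i" by simp
  have pre: "\<And>t. t \<le> arr i \<Longrightarrow> a i s t = a0 i s" using T s unfolding ps_trajectory_def by auto
  have "arr i < t" using gt pre[of t] a0 by (cases "t \<le> arr i") auto
  obtain t0 where t0: "arr i \<le> t0" "t0 \<le> t" "a i s t0 = sz i"
    using IVT'[of "a i s" "arr i" "sz i" t] pre[of "arr i"] a0 gt \<open>arr i < t\<close>
      traj_cont[OF T s mu] by force
  have J: "(srate mu pres ctyp sz a i s has_integral (a i s t - a i s t0)) {t0..t}"
    by (rule traj_diff[OF T s t0(1,2)])
  have "a i s t - a i s t0 \<le> 0"
  proof (rule has_integral_le[OF J has_integral_0])
    fix w assume w: "w \<in> {t0..t}"
    have "a i s w \<ge> a i s t0" using traj_lip[OF T s mu, of t0 w] w by auto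
    then have "\<not> copy_active pres ctyp sz a i s w" using t0 by (simp add: copy_active_def)
    then show "srate mu pres ctyp sz a i s w \<le> 0" by (simp add: srate_def)
  qed
  then show False using t0 gt by simp
qed



lemma Lset_ne:
  assumes "finite Si" "Si \<noteq> {}"
  shows "Lset mu p Si \<noteq> {}"
proof -
  let ?f = "ratio mu p (sub_types p Si)"
  have "Max (?f ` Si) \<in> ?f ` Si" using assms by (intro Max_in) auto
  then obtain s where s: "s \<in> Si" "?f s = Max (?f ` Si)" by auto
  have "\<forall>s'\<in>Si. ?f s' \<le> ?f s" using s assms by (auto intro: Max_ge)
  then show ?thesis using s unfolding Lset_def by auto
qed

lemma Sstage_sub: "Sstage mu p S i \<subseteq> S"
  by (induction i) auto

lemma Sstage_empty:
  assumes "finite S"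
  shows "Sstage mu p S i = {} \<or> card (Sstage mu p S i) + i \<le> card S"
proof (induction i)
  case 0 then show ?case by simp
next
  case (Suc i)
  let ?Si = "Sstage mu p S i"
  have fin: "finite ?Si" using Sstage_sub assms finite_subset by metis
  show ?case
  proof (cases "?Si = {}")
    case True then show ?thesis by simp
  next
    case False
    have L: "Lset mu p ?Si \<noteq> {}" "Lset mu p ?Si \<subseteq> ?Si" using Lset_ne[OF fin False]
      by (auto simp: Lset_def)
    have "card (?Si - Lset mu p ?Si) < card ?Si"
    proof (rule psubset_card_mono[OF fin])
      show "?Si - Lset mu p ?Si \<subset> ?Si" using L by blast
    qed
    then show ?thesis using Suc False by auto
  qed
qed

lemma R_props:
  assumes "finite S" "c \<in> types p" "c \<noteq> {}" "c \<subseteq> S"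
  shows "Rset mu p S c \<noteq> {}" "Rset mu p S c \<subseteq> c"
proof -
  show "Rset mu p S c \<subseteq> c" by (auto simp: Rset_def)
  show "Rset mu p S c \<noteq> {}"
  proof
    assume R: "Rset mu p S c = {}"
    have "c \<subseteq> Sstage mu p S i" for i
    proof (induction i)
      case 0 then show ?case using assms by simp
    next
      case (Suc i)
      have "c \<in> sub_types p (Sstage mu p S i)" using Suc assms by (simp add: sub_types_def)
      then have "\<forall>s\<in>c. s \<notin> Lset mu p (Sstage mu p S i)" using R by (auto simp: Rset_def)
      then show ?case using Suc by auto
    qed
    from this[of "Suc (card S)"] Sstage_empty[OF assms(1), of mu p "Suc (card S)"] assms(3)
    show False by auto
  qed
qed



lemma star:
  assumes finS: "finite S" and mupos: "\<forall>s\<in>S. mu s > 0"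
    and pc: "\<forall>c. p c > 0 \<longrightarrow> c \<noteq> {} \<and> c \<subseteq> S"
    and arr0: "\<forall>i. arr i \<ge> 0" and fin: "\<forall>T. finite {i. arr i \<le> T}"
    and ty: "\<forall>i. ctyp i \<in> types p"
    and TO: "ps_trajectory mu arr ctyp sz a0 (pres_orig arr ctyp sz aO) aO"
    and TU: "ps_trajectory mu arr ctyp sz a0 (pres_ub (Rset mu p S) arr ctyp sz aU) aU"
  shows "\<forall>i s. s \<in> ctyp i \<longrightarrow> pres_orig arr ctyp sz aO i t \<longrightarrow> aU i s t \<le> aO i s t"
proof -
  let ?R = "Rset mu p S"
  let ?PO = "pres_orig arr ctyp sz aO"
  let ?PU = "pres_ub ?R arr ctyp sz aU"
  have ctS: "\<And>i. ctyp i \<subseteq> S" and ctne: "\<And>i. ctyp i \<noteq> {}"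
    using ty pc by (auto simp: types_def)
  have muS: "\<And>i s. s \<in> ctyp i \<Longrightarrow> mu s > 0" using ctS mupos by blast
  have Rne: "\<And>i. ?R (ctyp i) \<noteq> {}" and Rsub: "\<And>i. ?R (ctyp i) \<subseteq> ctyp i"
    using R_props[OF finS ty[rule_format] ctne ctS] by auto
  have lipO: "\<And>i s t1 t2. s \<in> ctyp i \<Longrightarrow> t1 \<le> t2 \<Longrightarrow>
      0 \<le> aO i s t2 - aO i s t1 \<and> aO i s t2 - aO i s t1 \<le> mu s * (t2 - t1)"
    using traj_lip[OF TO] muS less_imp_le by blast
  have lipU: "\<And>i s t1 t2. s \<in> ctyp i \<Longrightarrow> t1 \<le> t2 \<Longrightarrow>
      0 \<le> aU i s t2 - aU i s t1 \<and> aU i s t2 - aU i s t1 \<le> mu s * (t2 - t1)"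
    using traj_lip[OF TU] muS less_imp_le by blast
  have preO: "\<And>i s t. s \<in> ctyp i \<Longrightarrow> t \<le> arr i \<Longrightarrow> aO i s t = a0 i s"
    using TO unfolding ps_trajectory_def by auto
  have preU: "\<And>i s t. s \<in> ctyp i \<Longrightarrow> t \<le> arr i \<Longrightarrow> aU i s t = a0 i s"
    using TU unfolding ps_trajectory_def by auto
  have POmono: "?PO i t1" if "?PO i t2" "arr i \<le> t1" "t1 \<le> t2" for i t1 t2
  proof -
    have "aO i s t1 < sz i" if "s \<in> ctyp i" for s
      using lipO[OF that \<open>t1 \<le> t2\<close>] \<open>?PO i t2\<close> that by (auto simp: pres_orig_def)
    then show ?thesis using that by (auto simp: pres_orig_def)
  qed
  define Star where "Star t \<longleftrightarrow> (\<forall>i s. s \<in> ctyp i \<longrightarrow> ?PO i t \<longrightarrow> aU i s t \<le> aO i s t)" for t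
  define Incl where "Incl w \<longleftrightarrow> (\<forall>k s. copy_active ?PO ctyp sz aO k s w
      \<longrightarrow> copy_active ?PU ctyp sz aU k s w)" for w
  have A: "Incl w" if "Star w" for w
    unfolding Incl_def
  proof (intro allI impI)
    fix k s assume ca: "copy_active ?PO ctyp sz aO k s w"
    then have po: "?PO k w" and s: "s \<in> ctyp k" "aO k s w < sz k"
      by (auto simp: copy_active_def)
    have lt: "aU k s' w < sz k" if "s' \<in> ctyp k" for s'
      using \<open>Star w\<close> po that unfolding Star_def pres_orig_def by force
    obtain s' where "s' \<in> ?R (ctyp k)" using Rne by blast
    then have "?PU k w" using lt Rsub po by (force simp: pres_ub_def pres_orig_def)
    then show "copy_active ?PU ctyp sz aU k s w" using lt s by (simp add: copy_active_def)
  qed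
  have Bl: "srate mu ?PU ctyp sz aU i s w \<le> srate mu ?PO ctyp sz aO i s w"
    if inc: "Incl w" and po: "?PO i w" and s: "s \<in> ctyp i" for w i s
  proof -
    let ?NO = "{k. copy_active ?PO ctyp sz aO k s w}"
    let ?NU = "{k. copy_active ?PU ctyp sz aU k s w}"
    have actO: "copy_active ?PO ctyp sz aO i s w" using po s by (simp add: copy_active_def pres_orig_def)
    have finU: "finite ?NU"
      by (rule finite_subset[OF _ fin[rule_format, of w]]) (auto simp: copy_active_def pres_ub_def)
    have sub: "?NO \<subseteq> ?NU" using inc by (auto simp: Incl_def)
    have finO: "finite ?NO" using finite_subset[OF sub finU] .
    have c1: "card ?NO \<le> card ?NU" by (rule card_mono[OF finU sub])
    have c0: "card ?NO > 0" using finO actO by (auto simp: card_gt_0_iff)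
    have m: "mu s > 0" using muS s .
    show ?thesis
    proof (cases "copy_active ?PU ctyp sz aU i s w")
      case True
      have "mu s / real (card ?NU) \<le> mu s / real (card ?NO)"
        by (rule divide_left_mono) (use c1 c0 m in auto)
      then show ?thesis using True actO by (simp add: srate_def ncopies_def)
    next
      case False
      then show ?thesis using srate_bounds(1)[of mu s] m by (simp add: srate_def)
    qed
  qed
  have Cl: "aU i s t2 - aU i s t1 \<le> aO i s t2 - aO i s t1"
    if s: "s \<in> ctyp i" and h: "arr i \<le> t1" "t1 \<le> t2"
      and le: "\<forall>w\<in>{t1..t2}. srate mu ?PU ctyp sz aU i s w \<le> srate mu ?PO ctyp sz aO i s w"
    for i s t1 t2
    by (rule has_integral_le[OF traj_diff[OF TU s h] traj_diff[OF TO s h]]) (use le in auto)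
  show ?thesis
  proof (rule ccontr)
    define V where "V = {t. \<not> Star t}"
    assume "\<not> ?thesis"
    then have tV: "t \<in> V" by (simp add: V_def Star_def)
    have V0: "0 \<le> x" if "x \<in> V" for x
    proof -
      from that obtain i where "?PO i x" by (auto simp: V_def Star_def)
      then show ?thesis using arr0 by (auto simp: pres_orig_def intro: order_trans)
    qed
    have bdd: "bdd_below V" using V0 by (rule bdd_belowI)
    define \<tau> where "\<tau> = Inf V"
    have low: "\<tau> \<le> x" if "x \<in> V" for x using cInf_lower[OF that bdd] by (simp add: \<tau>_def)
    have tauV: "\<tau> \<notin> V"
    proof
      assume "\<tau> \<in> V"
      then obtain i s where s: "s \<in> ctyp i" and po: "?PO i \<tau>" and gt: "aU i s \<tau> > aO i s \<tau>"
        by (auto simp: V_def Star_def)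
      have ai: "arr i \<le> \<tau>" using po by (simp add: pres_orig_def)
      have "arr i \<noteq> \<tau>" using preO[OF s] preU[OF s] gt by force
      with ai have ai': "arr i < \<tau>" by simp
      define d where "d = aU i s \<tau> - aO i s \<tau>"
      have d: "d > 0" using gt by (simp add: d_def)
      have m: "mu s > 0" using muS s .
      define t' where "t' = max (arr i) (\<tau> - d / (2 * mu s))"
      have t'1: "t' < \<tau>" using ai' d m by (simp add: t'_def)
      have t'2: "arr i \<le> t'" by (simp add: t'_def)
      have t'3: "\<tau> - t' \<le> d / (2 * mu s)" by (simp add: t'_def)
      have "mu s * (\<tau> - t') \<le> mu s * (d / (2 * mu s))" using t'3 m by (intro mult_left_mono) auto
      also have "\<dots> = d / 2" using m by simp
      finally have e1: "mu s * (\<tau> - t') \<le> d / 2" .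
      have "aU i s \<tau> - aU i s t' \<le> mu s * (\<tau> - t')" using lipU[OF s, of t' \<tau>] t'1 by simp
      moreover have "aO i s t' \<le> aO i s \<tau>" using lipO[OF s, of t' \<tau>] t'1 by simp
      ultimately have "aU i s t' > aO i s t'" using e1 d by (simp add: d_def)
      moreover have "?PO i t'" using POmono[OF po t'2] t'1 by simp
      ultimately have "t' \<in> V" using s unfolding V_def Star_def by force
      then show False using low t'1 by force
    qed
    have Stau: "Star \<tau>" using tauV by (simp add: V_def)
    have ev1: "eventually (\<lambda>u. \<forall>k. arr k \<le> u \<longrightarrow> arr k \<le> \<tau>) (at_right \<tau>)"
    proof -
      let ?A = "{k. arr k \<le> \<tau> + 1}"
      have "finite ?A" using fin by simp
      moreover have "\<forall>k\<in>?A. eventually (\<lambda>u. arr k \<le> u \<longrightarrow> arr k \<le> \<tau>) (at_right \<tau>)"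
      proof
        fix k assume "k \<in> ?A"
        show "eventually (\<lambda>u. arr k \<le> u \<longrightarrow> arr k \<le> \<tau>) (at_right \<tau>)"
        proof (cases "arr k \<le> \<tau>")
          case True then show ?thesis by simp
        next
          case False
          then show ?thesis unfolding eventually_at_right_field
            by (intro exI[of _ "arr k"]) auto
        qed
      qed
      ultimately have E: "eventually (\<lambda>u. \<forall>k\<in>?A. arr k \<le> u \<longrightarrow> arr k \<le> \<tau>) (at_right \<tau>)"
        by (rule eventually_ball_finite)
      have E2: "eventually (\<lambda>u. u < \<tau> + 1) (at_right \<tau>)"
        unfolding eventually_at_right_field by (intro exI[of _ "\<tau> + 1"]) auto
      show ?thesis using eventually_conj[OF E E2]
        by (rule eventually_mono) force
    qed
    define B where "B = {(k, s). arr k \<le> \<tau> \<and> s \<in> ctyp k \<and> aU k s \<tau> < sz k}"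
    have ev2: "eventually (\<lambda>u. \<forall>(k,s)\<in>B. aU k s u < sz k) (at_right \<tau>)"
    proof -
      have "finite B"
        by (rule finite_subset[of _ "{k. arr k \<le> \<tau>} \<times> S"]) (use ctS fin finS in \<open>auto simp: B_def\<close>)
      moreover have "\<forall>ks\<in>B. eventually (\<lambda>u. (\<lambda>(k,s). aU k s u < sz k) ks) (at_right \<tau>)"
      proof
        fix ks assume "ks \<in> B"
        then obtain k s where ks: "ks = (k, s)" "s \<in> ctyp k" "aU k s \<tau> < sz k"
          by (auto simp: B_def)
        have m: "mu s > 0" using muS ks(2) .
        have "\<forall>y>\<tau>. y < \<tau> + (sz k - aU k s \<tau>) / mu s \<longrightarrow> aU k s y < sz k"
        proof (intro allI impI)
          fix y assume y: "y > \<tau>" "y < \<tau> + (sz k - aU k s \<tau>) / mu s"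
          have "aU k s y - aU k s \<tau> \<le> mu s * (y - \<tau>)" using lipU[OF ks(2), of \<tau> y] y by simp
          also have "\<dots> < mu s * ((sz k - aU k s \<tau>) / mu s)" using y m by (intro mult_strict_left_mono) auto
          also have "\<dots> = sz k - aU k s \<tau>" using m by simp
          finally show "aU k s y < sz k" by simp
        qed
        then show "eventually (\<lambda>u. (\<lambda>(k,s). aU k s u < sz k) ks) (at_right \<tau>)"
          unfolding eventually_at_right_field ks(1) using ks m
          by (intro exI[of _ "\<tau> + (sz k - aU k s \<tau>) / mu s"]) auto
      qed
      ultimately show ?thesis by (rule eventually_ball_finite)
    qed
    have ev: "eventually (\<lambda>u. Incl u \<and> (\<forall>k. arr k \<le> u \<longrightarrow> arr k \<le> \<tau>)) (at_right \<tau>)"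
      using eventually_conj[OF eventually_conj[OF ev1 ev2] eventually_at_right_less[of \<tau>]]
    proof (rule eventually_mono)
      fix u assume H: "((\<forall>k. arr k \<le> u \<longrightarrow> arr k \<le> \<tau>) \<and> (\<forall>(k,s)\<in>B. aU k s u < sz k)) \<and> \<tau> < u"
      have "Incl u" unfolding Incl_def
      proof (intro allI impI)
        fix k s assume ca: "copy_active ?PO ctyp sz aO k s u"
        then have po: "?PO k u" and s: "s \<in> ctyp k" "aO k s u < sz k" by (auto simp: copy_active_def)
        have ak: "arr k \<le> \<tau>" using H po by (simp add: pres_orig_def)
        have poT: "?PO k \<tau>" using POmono[OF po ak] H by simp
        have "aU k s' \<tau> < sz k" if "s' \<in> ctyp k" for s'
          using Stau poT that unfolding Star_def pres_orig_def by force
        then have lt: "aU k s' u < sz k" if "s' \<in> ctyp k" for s'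
          using H that ak by (auto simp: B_def)
        obtain s' where "s' \<in> ?R (ctyp k)" using Rne by blast
        then have "?PU k u" using lt Rsub po by (force simp: pres_ub_def pres_orig_def)
        then show "copy_active ?PU ctyp sz aU k s u" using lt s by (simp add: copy_active_def)
      qed
      then show "Incl u \<and> (\<forall>k. arr k \<le> u \<longrightarrow> arr k \<le> \<tau>)" using H by simp
    qed
    then obtain b where b: "b > \<tau>" and bP: "\<And>u. \<tau> < u \<Longrightarrow> u < b \<Longrightarrow> Incl u \<and> (\<forall>k. arr k \<le> u \<longrightarrow> arr k \<le> \<tau>)"
      unfolding eventually_at_right_field by blast
    have Su: "Star u" if u: "\<tau> < u" "u < b" for u
      unfolding Star_def
    proof (intro allI impI)
      fix i s assume s: "s \<in> ctyp i" and po: "?PO i u"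
      have ai: "arr i \<le> \<tau>" using bP[OF u] po by (simp add: pres_orig_def)
      have poT: "?PO i \<tau>" using POmono[OF po ai] u by simp
      have base: "aU i s \<tau> \<le> aO i s \<tau>" using Stau poT s by (simp add: Star_def)
      have "\<forall>w\<in>{\<tau>..u}. srate mu ?PU ctyp sz aU i s w \<le> srate mu ?PO ctyp sz aO i s w"
      proof
        fix w assume w: "w \<in> {\<tau>..u}"
        have "Incl w"
        proof (cases "w = \<tau>")
          case True then show ?thesis using A Stau by simp
        next
          case False then show ?thesis using bP[of w] w u by auto
        qed
        moreover have "?PO i w" using POmono[OF po, of w] ai w by auto
        ultimately show "srate mu ?PU ctyp sz aU i s w \<le> srate mu ?PO ctyp sz aO i s w"
          using Bl s by blast
      qed
      then have "aU i s u - aU i s \<tau> \<le> aO i s u - aO i s \<tau>" using Cl[OF s ai] u by simp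
      then show "aU i s u \<le> aO i s u" using base by simp
    qed
    have "b \<le> x" if "x \<in> V" for x
    proof (rule ccontr)
      assume "\<not> b \<le> x"
      moreover have "\<tau> \<le> x" using low that .
      moreover have "x \<noteq> \<tau>" using tauV that by auto
      ultimately have "Star x" using Su by simp
      then show False using that by (simp add: V_def)
    qed
    then have "b \<le> \<tau>" unfolding \<tau>_def using tV by (intro cInf_greatest) auto
    then show False using b by simp
  qed
qed

theorem proposition3:
  fixes S :: "'s set" and mu :: "'s \<Rightarrow> real" and p :: "'s set \<Rightarrow> real"
    and arr :: "nat \<Rightarrow> real" and ctyp :: "nat \<Rightarrow> 's set" and sz :: "nat \<Rightarrow> real"
    and a0 :: "nat \<Rightarrow> 's \<Rightarrow> real"
    and aO aU :: "nat \<Rightarrow> 's \<Rightarrow> real \<Rightarrow> real"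
  assumes "finite S" and "S \<noteq> {}"
    and "\<forall>s\<in>S. mu s > 0"
    and "\<forall>c. p c \<ge> 0"
    and "\<forall>c. p c > 0 \<longrightarrow> c \<noteq> {} \<and> c \<subseteq> S"
    and "(\<Sum>c\<in>Pow S. p c) = 1"
    and "\<forall>i. arr i \<ge> 0"
    and "\<forall>T. finite {i. arr i \<le> T}"
    and "\<forall>i. ctyp i \<in> types p"
    and "\<forall>i. sz i > 0"
    and "\<forall>i s. s \<in> ctyp i \<longrightarrow> 0 \<le> a0 i s \<and> a0 i s < sz i"
    and "\<forall>i s. arr i > 0 \<longrightarrow> a0 i s = 0"
    and "ps_trajectory mu arr ctyp sz a0 (pres_orig arr ctyp sz aO) aO"
    and "ps_trajectory mu arr ctyp sz a0 (pres_ub (Rset mu p S) arr ctyp sz aU) aU"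
  shows "(\<forall>c t. 0 \<le> t \<longrightarrow>
            Ncount (pres_orig arr ctyp sz aO) ctyp c t
              \<le> Ncount (pres_ub (Rset mu p S) arr ctyp sz aU) ctyp c t)
       \<and> (\<forall>i s t. 0 \<le> t \<longrightarrow> s \<in> ctyp i \<longrightarrow> pres_ub (Rset mu p S) arr ctyp sz aU i t \<longrightarrow>
            aU i s t \<le> a_orig_conv arr ctyp sz aO i s t)"
  proof -
  note A = assms
  let ?R = "Rset mu p S"
  have ctS: "\<And>i. ctyp i \<subseteq> S" and ctne: "\<And>i. ctyp i \<noteq> {}"
    using A(9) A(5) by (auto simp: types_def)
  have Rne: "\<And>i. ?R (ctyp i) \<noteq> {}" and Rsub: "\<And>i. ?R (ctyp i) \<subseteq> ctyp i"
    using R_props[OF A(1) A(9)[rule_format] ctne ctS] by auto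
  have st: "\<And>t i s. s \<in> ctyp i \<Longrightarrow> pres_orig arr ctyp sz aO i t \<Longrightarrow> aU i s t \<le> aO i s t"
    using star[OF A(1) A(3) A(5) A(7) A(8) A(9) A(13) A(14)] by blast
  have lesz: "\<And>i s t. s \<in> ctyp i \<Longrightarrow> aU i s t \<le> sz i"
  proof -
    fix i s t assume s: "s \<in> ctyp i"
    have "mu s \<ge> 0" using A(3) ctS s by (meson less_imp_le subsetD)
    then show "aU i s t \<le> sz i" using traj_le_sz[OF A(14) s] A(11) s by blast
  qed
  have incl: "pres_ub ?R arr ctyp sz aU i t" if "pres_orig arr ctyp sz aO i t" for i t
  proof -
    obtain s' where s': "s' \<in> ?R (ctyp i)" using Rne by blast
    then have "s' \<in> ctyp i" using Rsub by blast
    then have "aU i s' t < sz i" using st[OF _ that] that by (force simp: pres_orig_def)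
    then show ?thesis using s' that by (auto simp: pres_ub_def pres_orig_def)
  qed
  show ?thesis
  proof (intro conjI allI impI)
    fix c t assume "0 \<le> (t::real)"
    have "{i. pres_orig arr ctyp sz aO i t \<and> ctyp i = c} \<subseteq> {i. pres_ub ?R arr ctyp sz aU i t \<and> ctyp i = c}"
      using incl by blast
    moreover have "finite {i. pres_ub ?R arr ctyp sz aU i t \<and> ctyp i = c}"
      by (rule finite_subset[OF _ A(8)[rule_format, of t]]) (auto simp: pres_ub_def)
    ultimately show "Ncount (pres_orig arr ctyp sz aO) ctyp c t \<le> Ncount (pres_ub ?R arr ctyp sz aU) ctyp c t"
      unfolding Ncount_def by (rule card_mono[rotated])
  next
    fix i s t assume "0 \<le> (t::real)" and s: "s \<in> ctyp i" and pu: "pres_ub ?R arr ctyp sz aU i t"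
    show "aU i s t \<le> a_orig_conv arr ctyp sz aO i s t"
    proof (cases "pres_orig arr ctyp sz aO i t")
      case True then show ?thesis using st[OF s True] by (simp add: a_orig_conv_def)
    next
      case False then show ?thesis using lesz[OF s] pu by (simp add: a_orig_conv_def pres_ub_def)
    qed
  qed
qed

end
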